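(* Let $\pi\colon X\to Y=\mathbb P^1$ be a $\mathbb P^r$-bundle over $\mathbb P^1$, regarded as a toric morphism of toric varieties, and let $\Delta$ be a torus invariant horizontal effective $\mathbb R$-divisor on $X$ such that every coefficient of $\Delta$ is less than one. If there exists an extremal ray $R$ of $\mathrm{NE}(X)$ such that $(K_{X/Y}+\Delta)\cdot R=0$, then $X=\mathbb P^r\times \mathbb P^1$ and $\pi$ is the second projection.
   Context: Work over $\mathbb C$. Every $\mathbb P^r$-bundle over $\mathbb P^1$ is of the form $\mathbb P_{\mathbb P^1}(\mathcal O(c_0)\oplus\cdots\oplus\mathcal O(c_r))$ and carries the corresponding toric structure making $\pi$ toric. $K_{X/Y}=K_X-\pi^*K_Y$ is the relative canonical divisor; a divisor is horizontal if each of its components dominates $Y$; $\mathrm{NE}(X)$ is the cone of curves. *)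

theory Defs
  imports Complex_Main
begin

text \<open>A fan in N = Z^n is given by a set I of ray indices, primitive ray generators
  u :: 'i => (nat => int) (vectors supported on coordinates 0..n-1), and the set C of
  maximal cones, each given as the set of its rays (the fans used here are smooth and
  complete, so every maximal cone has exactly n rays).\<close>

text \<open>Wall curves: for two maximal cones sigma, sigma' meeting in a common facet tau
  (n-1 common rays) the torus invariant curve V(tau) has intersection numbers with the
  torus invariant prime divisors D_rho given by the wall relation
  u_rho + u_rho' + sum_{rho'' in tau} b_rho'' u_rho'' = 0, i.e. D_rho . V(tau) = 1 for
  the two rays outside tau, b_rho'' for rays of tau, and 0 otherwise.
  A 1-cycle class is represented by its vector of intersection numbers with the D_rho.\<close>

definition wall_vec :: "nat \<Rightarrow> ('i \<Rightarrow> nat \<Rightarrow> int) \<Rightarrow> 'i set set \<Rightarrow> ('i \<Rightarrow> real) \<Rightarrow> bool" where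
  "wall_vec n u C b \<longleftrightarrow>
     (\<exists>\<sigma>\<in>C. \<exists>\<sigma>'\<in>C. card \<sigma> = n \<and> card \<sigma>' = n \<and> card (\<sigma> \<inter> \<sigma>') + 1 = n \<and>
        (\<forall>\<rho>. \<rho> \<notin> \<sigma> \<union> \<sigma>' \<longrightarrow> b \<rho> = 0) \<and>
        (\<forall>\<rho>\<in>\<sigma> - \<sigma>'. b \<rho> = 1) \<and> (\<forall>\<rho>\<in>\<sigma>' - \<sigma>. b \<rho> = 1) \<and>
        (\<forall>k<n. (\<Sum>\<rho>\<in>\<sigma> \<union> \<sigma>'. b \<rho> * real_of_int (u \<rho> k)) = 0))"

definition cone_gen :: "('i \<Rightarrow> real) set \<Rightarrow> ('i \<Rightarrow> real) set" where
  "cone_gen G = {z. \<exists>S l. finite S \<and> S \<subseteq> G \<and> (\<forall>g\<in>S. l g \<ge> 0) \<and>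
                        z = (\<lambda>\<rho>. \<Sum>g\<in>S. l g * g \<rho>)}"

text \<open>Cone of curves NE(X) of a complete toric variety: generated by the classes of
  the torus invariant curves (toric cone theorem); finitely generated, hence closed.\<close>

definition NE_cone :: "nat \<Rightarrow> ('i \<Rightarrow> nat \<Rightarrow> int) \<Rightarrow> 'i set set \<Rightarrow> ('i \<Rightarrow> real) set" where
  "NE_cone n u C = cone_gen {b. wall_vec n u C b}"

definition extremal_ray :: "('i \<Rightarrow> real) set \<Rightarrow> ('i \<Rightarrow> real) set \<Rightarrow> bool" where
  "extremal_ray K R \<longleftrightarrow>
     (\<exists>z\<in>K. z \<noteq> (\<lambda>_. 0) \<and> R = {(\<lambda>\<rho>. t * z \<rho>) | t. t \<ge> 0}) \<and>
     (\<forall>a\<in>K. \<forall>b\<in>K. (\<lambda>\<rho>. a \<rho> + b \<rho>) \<in> R \<longrightarrow> a \<in> R \<and> b \<in> R)"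

definition intersect :: "'i set \<Rightarrow> ('i \<Rightarrow> real) \<Rightarrow> ('i \<Rightarrow> real) \<Rightarrow> real" where
  "intersect I D z = (\<Sum>\<rho>\<in>I. D \<rho> * z \<rho>)"

text \<open>The toric morphism pi : X -> P^1 is induced by the projection N = Z^n -> Z onto the
  last coordinate (index n-1), the fan of P^1 having rays 1 and -1.
  K_X = - sum D_rho.  K_{P^1} = -D_1 - D_{-1} has support function phi(t) = |t|, so
  pi^* K_{P^1} = - sum_rho |u_rho(n-1)| D_rho.\<close>

definition canonical_div :: "('i \<Rightarrow> real)" where
  "canonical_div = (\<lambda>\<rho>. -1)"

definition pullback_KY :: "nat \<Rightarrow> ('i \<Rightarrow> nat \<Rightarrow> int) \<Rightarrow> ('i \<Rightarrow> real)" where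
  "pullback_KY n u = (\<lambda>\<rho>. - \<bar>real_of_int (u \<rho> (n - 1))\<bar>)"

definition rel_canonical :: "nat \<Rightarrow> ('i \<Rightarrow> nat \<Rightarrow> int) \<Rightarrow> ('i \<Rightarrow> real)" where
  "rel_canonical n u = (\<lambda>\<rho>. canonical_div \<rho> - pullback_KY n u \<rho>)"

text \<open>A torus invariant prime divisor D_rho dominates Y iff u_rho lies in the kernel of
  the projection, i.e. iff its last coordinate vanishes.\<close>

definition horizontal :: "nat \<Rightarrow> 'i set \<Rightarrow> ('i \<Rightarrow> nat \<Rightarrow> int) \<Rightarrow> ('i \<Rightarrow> real) \<Rightarrow> bool" where
  "horizontal n I u D \<longleftrightarrow> (\<forall>\<rho>\<in>I. D \<rho> \<noteq> 0 \<longrightarrow> u \<rho> (n - 1) = 0)"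

text \<open>Integer matrices acting on Z^n, and toric isomorphisms over Y = P^1: a lattice
  automorphism of N commuting with the projection to the last coordinate and carrying
  the fan of one variety onto the fan of the other.\<close>

definition mat_vec :: "nat \<Rightarrow> (nat \<Rightarrow> nat \<Rightarrow> int) \<Rightarrow> (nat \<Rightarrow> int) \<Rightarrow> (nat \<Rightarrow> int)" where
  "mat_vec n A v = (\<lambda>i. if i < n then (\<Sum>j<n. A i j * v j) else 0)"

definition lattice_aut :: "nat \<Rightarrow> (nat \<Rightarrow> nat \<Rightarrow> int) \<Rightarrow> bool" where
  "lattice_aut n A \<longleftrightarrow> (\<exists>B. (\<forall>i<n. \<forall>k<n. (\<Sum>j<n. A i j * B j k) = (if i = k then 1 else 0)) \<and>
                             (\<forall>i<n. \<forall>k<n. (\<Sum>j<n. B i j * A j k) = (if i = k then 1 else 0)))"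

definition toric_iso_over_P1 ::
  "nat \<Rightarrow> 'i set \<Rightarrow> ('i \<Rightarrow> nat \<Rightarrow> int) \<Rightarrow> 'i set set \<Rightarrow>
          'j set \<Rightarrow> ('j \<Rightarrow> nat \<Rightarrow> int) \<Rightarrow> 'j set set \<Rightarrow> bool" where
  "toric_iso_over_P1 n I u C I' u' C' \<longleftrightarrow>
     (\<exists>A f. lattice_aut n A \<and>
        (\<forall>v. mat_vec n A v (n - 1) = mat_vec n (\<lambda>i j. if i = j then 1 else 0) v (n - 1)) \<and>
        bij_betw f I I' \<and> (\<forall>\<rho>\<in>I. mat_vec n A (u \<rho>) = u' (f \<rho>)) \<and>
        C' = (\<lambda>\<sigma>. f ` \<sigma>) ` C)"

text \<open>N = Z^(r+1); coordinates 0..r-1 are the fibre directions, coordinate r the base.  For c constant this is the product fan of P^r x P^1.\<close>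

datatype bray = Fib nat | Up | Down

definition bundle_rays :: "nat \<Rightarrow> bray set" where
  "bundle_rays r = Fib ` {0..r} \<union> {Up, Down}"

fun bundle_u :: "nat \<Rightarrow> (nat \<Rightarrow> int) \<Rightarrow> bray \<Rightarrow> nat \<Rightarrow> int" where
  "bundle_u r c (Fib i) = (\<lambda>k. if i = 0 then (if k < r then -1 else 0)
                              else (if k + 1 = i then 1 else 0))"
| "bundle_u r c Up = (\<lambda>k. if k = r then 1 else 0)"
| "bundle_u r c Down = (\<lambda>k. if k < r then c (k + 1) - c 0 else if k = r then -1 else 0)"

definition bundle_cones :: "nat \<Rightarrow> bray set set" where
  "bundle_cones r = {insert s (Fib ` ({0..r} - {j})) | s j. s \<in> {Up, Down} \<and> j \<le> r}"

definition product_u :: "nat \<Rightarrow> bray \<Rightarrow> nat \<Rightarrow> int" where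
  "product_u r = bundle_u r (\<lambda>_. 0)"

end

theory Submission
  imports Defs
begin

lemma dsum: "(\<Sum>j<(n::nat). (if i = j then 1 else 0) * f j) = (if i < n then f i else (0::int))"
proof -
  have "(\<Sum>j<n. (if i = j then 1 else 0) * f j) = (\<Sum>j<n. if j = i then f j else 0)"
    by (rule sum.cong) auto
  also have "\<dots> = (if i \<in> {..<n} then f i else 0)" by (rule sum.delta) simp
  finally show ?thesis by simp
qed
lemma la: "lattice_aut n (\<lambda>i j. if i = j then (1::int) else 0)"
  unfolding lattice_aut_def by (rule exI[of _ "\<lambda>i j. if i = j then (1::int) else 0"]) (simp add: dsum)
lemma mvid: "mat_vec n (\<lambda>i j. if i = j then (1::int) else 0) v = (\<lambda>i. if i < n then v i else 0)"
  unfolding mat_vec_def by (rule ext) (simp add: dsum)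

lemma card_fibs: "card (Fib ` ({0..r} - A)) = card ({0..r} - A)"
  by (rule card_image) (auto simp: inj_on_def)

lemma card_cone: "j \<le> r \<Longrightarrow> s \<in> {Up, Down} \<Longrightarrow> card (insert s (Fib ` ({0..r} - {j}))) = r + 1"
proof -
  assume a: "j \<le> r" "s \<in> {Up, Down}"
  have "s \<notin> Fib ` ({0..r} - {j})" using a by auto
  then have "card (insert s (Fib ` ({0..r} - {j}))) = Suc (card (Fib ` ({0..r} - {j})))"
    by (simp add: card_insert_disjoint)
  also have "\<dots> = r + 1" using a by (simp add: card_fibs)
  finally show ?thesis .
qed

lemma bundle_sum:
  fixes g :: "bray \<Rightarrow> real"
  shows "(\<Sum>\<rho>\<in>bundle_rays r. g \<rho>) = (\<Sum>i\<in>{0..r}. g (Fib i)) + g Up + g Down"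
proof -
  have d: "Fib ` {0..r} \<inter> {Up, Down} = {}" by auto
  have "(\<Sum>\<rho>\<in>bundle_rays r. g \<rho>) = (\<Sum>\<rho>\<in>Fib ` {0..r}. g \<rho>) + (\<Sum>\<rho>\<in>{Up,Down}. g \<rho>)"
    unfolding bundle_rays_def by (rule sum.union_disjoint) (use d in auto)
  also have "(\<Sum>\<rho>\<in>Fib ` {0..r}. g \<rho>) = (\<Sum>i\<in>{0..r}. g (Fib i))"
    by (rule sum.reindex_cong[where l=Fib]) (auto simp: inj_on_def)
  finally show ?thesis by simp
qed

lemma fib_sum_k:
  fixes h :: "nat \<Rightarrow> real"
  assumes k: "k < r"
  shows "(\<Sum>i\<in>{0..r}. h i * real_of_int (bundle_u r c (Fib i) k)) = - h 0 + h (k+1)"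
proof -
  have "(\<Sum>i\<in>{0..r}. h i * real_of_int (bundle_u r c (Fib i) k))
      = h 0 * (-1) + (\<Sum>i\<in>{Suc 0..r}. h i * real_of_int (bundle_u r c (Fib i) k))"
    using k by (simp add: sum.atLeast_Suc_atMost)
  also have "(\<Sum>i\<in>{Suc 0..r}. h i * real_of_int (bundle_u r c (Fib i) k))
      = (\<Sum>i\<in>{Suc 0..r}. if i = k + 1 then h i else 0)"
    by (rule sum.cong) auto
  also have "\<dots> = h (k+1)" using k by (simp add: sum.delta)
  finally show ?thesis by simp
qed

lemma fib_sum_r:
  fixes h :: "nat \<Rightarrow> real"
  shows "(\<Sum>i\<in>{0..r}. h i * real_of_int (bundle_u r c (Fib i) r)) = 0"
  by (rule sum.neutral) auto

definition fvec :: "nat \<Rightarrow> bray \<Rightarrow> real" where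
  "fvec r = (\<lambda>\<rho>. case \<rho> of Fib i \<Rightarrow> if i \<le> r then 1 else 0 | _ \<Rightarrow> 0)"
definition gvec :: "nat \<Rightarrow> (nat \<Rightarrow> int) \<Rightarrow> nat \<Rightarrow> bray \<Rightarrow> real" where
  "gvec r c m = (\<lambda>\<rho>. case \<rho> of Fib i \<Rightarrow> if i \<le> r then real_of_int (c m - c i) else 0 | _ \<Rightarrow> 1)"

lemma f_wall: assumes "r \<ge> 1" shows "wall_vec (r + 1) (bundle_u r c) (bundle_cones r) (fvec r)"
proof -
  let ?s = "insert Up (Fib ` ({0..r} - {0}))"
  let ?s' = "insert Up (Fib ` ({0..r} - {1}))"
  have in1: "?s \<in> bundle_cones r" "?s' \<in> bundle_cones r" unfolding bundle_cones_def using assms by blast+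
  have c1: "card ?s = r + 1" "card ?s' = r + 1" using assms card_cone[of _ r] by auto
  have "?s \<inter> ?s' = insert Up (Fib ` ({0..r} - {0,1}))" by auto
  moreover have "card (insert Up (Fib ` ({0..r} - {0,1}))) = r"
  proof -
    have "card ({0..r} - {0,1}) = card {0..r} - card {0::nat,1}"
      by (rule card_Diff_subset) (use assms in auto)
    then have "card ({0..r} - {0,1}) = r - 1" by simp
    moreover have "Up \<notin> Fib ` ({0..r} - {0,1})" by auto
    ultimately show ?thesis using assms by (simp add: card_fibs)
  qed
  ultimately have c2: "card (?s \<inter> ?s') + 1 = r + 1" using assms by simp
  have U: "?s \<union> ?s' = insert Up (Fib ` {0..r})" using assms by auto
  have rel: "(\<Sum>\<rho>\<in>?s \<union> ?s'. fvec r \<rho> * real_of_int (bundle_u r c \<rho> k)) = 0" if "k < r + 1" for k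
  proof -
    have "(\<Sum>\<rho>\<in>?s \<union> ?s'. fvec r \<rho> * real_of_int (bundle_u r c \<rho> k))
        = (\<Sum>\<rho>\<in>bundle_rays r. fvec r \<rho> * real_of_int (bundle_u r c \<rho> k))"
      by (rule sum.mono_neutral_left) (auto simp: bundle_rays_def fvec_def)
    also have "\<dots> = (\<Sum>i\<in>{0..r}. 1 * real_of_int (bundle_u r c (Fib i) k))"
      unfolding bundle_sum by (auto simp: fvec_def intro!: sum.cong)
    also have "\<dots> = 0"
    proof (cases "k < r")
      case True
      then show ?thesis using fib_sum_k[OF True, of "\<lambda>_. 1" c] by simp
    next
      case False
      then have "k = r" using that by simp
      then show ?thesis using fib_sum_r[of "\<lambda>_. 1" r c] by simp
    qed
    finally show ?thesis .
  qed
  have o1: "\<forall>\<rho>. \<rho> \<notin> ?s \<union> ?s' \<longrightarrow> fvec r \<rho> = 0"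
  proof (intro allI impI)
    fix \<rho> assume h: "\<rho> \<notin> ?s \<union> ?s'"
    show "fvec r \<rho> = 0"
    proof (cases \<rho>)
      case (Fib i) then show ?thesis using h U by (auto simp: fvec_def)
    qed (auto simp: fvec_def)
  qed
  have fib1: "\<forall>\<rho>\<in>Fib ` {0..r}. fvec r \<rho> = 1" by (auto simp: fvec_def)
  have "?s - ?s' \<subseteq> Fib ` {0..r}" "?s' - ?s \<subseteq> Fib ` {0..r}" by auto
  then have o2: "\<forall>\<rho>\<in>?s - ?s'. fvec r \<rho> = 1" "\<forall>\<rho>\<in>?s' - ?s. fvec r \<rho> = 1"
    using fib1 by blast+
  show ?thesis unfolding wall_vec_def
    apply (rule bexI[where x="?s"], rule bexI[where x="?s'"])
      apply (intro conjI c1 c2 o1 o2 allI impI rel)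
      apply assumption
     apply (rule in1(2))
    apply (rule in1(1))
    done
qed

lemma g_wall: assumes "m \<le> r" shows "wall_vec (r + 1) (bundle_u r c) (bundle_cones r) (gvec r c m)"
proof -
  let ?s = "insert Up (Fib ` ({0..r} - {m}))"
  let ?s' = "insert Down (Fib ` ({0..r} - {m}))"
  have in1: "?s \<in> bundle_cones r" "?s' \<in> bundle_cones r" unfolding bundle_cones_def using assms by blast+
  have c1: "card ?s = r + 1" "card ?s' = r + 1" using assms card_cone[of _ r] by auto
  have "?s \<inter> ?s' = Fib ` ({0..r} - {m})" by auto
  moreover have "card (Fib ` ({0..r} - {m})) = r"
    using assms by (simp add: card_fibs)
  ultimately have c2: "card (?s \<inter> ?s') + 1 = r + 1" using assms by simp
  have gsum: "(\<Sum>i\<in>{0..r}. gvec r c m (Fib i) * X i) = (\<Sum>i\<in>{0..r}. real_of_int (c m - c i) * X i)" for X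
    by (rule sum.cong) (auto simp: gvec_def)
  have rel: "(\<Sum>\<rho>\<in>?s \<union> ?s'. gvec r c m \<rho> * real_of_int (bundle_u r c \<rho> k)) = 0" if "k < r + 1" for k
  proof -
    have "(\<Sum>\<rho>\<in>?s \<union> ?s'. gvec r c m \<rho> * real_of_int (bundle_u r c \<rho> k))
        = (\<Sum>\<rho>\<in>bundle_rays r. gvec r c m \<rho> * real_of_int (bundle_u r c \<rho> k))"
    proof (rule sum.mono_neutral_left)
      show "finite (bundle_rays r)" by (simp add: bundle_rays_def)
      show "?s \<union> ?s' \<subseteq> bundle_rays r" by (auto simp: bundle_rays_def)
      have "bundle_rays r - (?s \<union> ?s') \<subseteq> {Fib m}" by (auto simp: bundle_rays_def)
      moreover have "gvec r c m (Fib m) = 0" using assms by (simp add: gvec_def)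
      ultimately show "\<forall>i\<in>bundle_rays r - (?s \<union> ?s'). gvec r c m i * real_of_int (bundle_u r c i k) = 0"
        by auto
    qed
    also have "\<dots> = (\<Sum>i\<in>{0..r}. real_of_int (c m - c i) * real_of_int (bundle_u r c (Fib i) k))
       + real_of_int (bundle_u r c Up k) + real_of_int (bundle_u r c Down k)"
      unfolding bundle_sum gsum by (simp add: gvec_def)
    also have "\<dots> = 0"
    proof (cases "k < r")
      case True
      then show ?thesis using fib_sum_k[OF True, of "\<lambda>i. real_of_int (c m - c i)" c] by simp
    next
      case False
      then have "k = r" using that by simp
      then show ?thesis using fib_sum_r[of "\<lambda>i. real_of_int (c m - c i)" r c] by simp
    qed
    finally show ?thesis .
  qed
  have o1: "\<forall>\<rho>. \<rho> \<notin> ?s \<union> ?s' \<longrightarrow> gvec r c m \<rho> = 0"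
  proof (intro allI impI)
    fix \<rho> assume h: "\<rho> \<notin> ?s \<union> ?s'"
    show "gvec r c m \<rho> = 0"
    proof (cases \<rho>)
      case (Fib i) then show ?thesis using h by (cases "i \<le> r") (auto simp: gvec_def)
    qed (use h in auto)
  qed
  have "?s - ?s' \<subseteq> {Up}" "?s' - ?s \<subseteq> {Down}" by auto
  then have o2: "\<forall>\<rho>\<in>?s - ?s'. gvec r c m \<rho> = 1" "\<forall>\<rho>\<in>?s' - ?s. gvec r c m \<rho> = 1"
    by (auto simp: gvec_def)
  show ?thesis unfolding wall_vec_def
    apply (rule bexI[where x="?s"], rule bexI[where x="?s'"])
      apply (intro conjI c1 c2 o1 o2 allI impI rel)
      apply assumption
     apply (rule in1(2))
    apply (rule in1(1))
    done
qed


lemma lin: "z (Fib i) = z (Fib 0) - d * real_of_int (c i - c 0) \<Longrightarrow> z (Fib m) = z (Fib 0) - d * real_of_int (c m - c 0) \<Longrightarrow>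
  z (Fib i) = z (Fib m) + d * real_of_int (c m - c i)"
  unfolding of_int_diff right_diff_distrib by argo

lemma wall_props:
  assumes w: "wall_vec (r + 1) (bundle_u r c) (bundle_cones r) b"
    and m: "m \<le> r" "\<forall>i\<le>r. c m \<le> c i"
  shows "b Up = b Down"
    and "\<forall>i\<le>r. b (Fib i) = b (Fib 0) - b Down * real_of_int (c i - c 0)"
    and "b Down \<ge> 0"
    and "b (Fib m) \<ge> 0"
    and "\<forall>\<rho>. \<rho> \<notin> bundle_rays r \<longrightarrow> b \<rho> = 0"
proof -
  obtain \<sigma> \<sigma>' where sC: "\<sigma> \<in> bundle_cones r" "\<sigma>' \<in> bundle_cones r"
    and out: "\<forall>\<rho>. \<rho> \<notin> \<sigma> \<union> \<sigma>' \<longrightarrow> b \<rho> = 0"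
    and one1: "\<forall>\<rho>\<in>\<sigma> - \<sigma>'. b \<rho> = 1" and one2: "\<forall>\<rho>\<in>\<sigma>' - \<sigma>. b \<rho> = 1"
    and rel: "\<forall>k<r+1. (\<Sum>\<rho>\<in>\<sigma> \<union> \<sigma>'. b \<rho> * real_of_int (bundle_u r c \<rho> k)) = 0"
    using w unfolding wall_vec_def by blast
  obtain s j where s: "s \<in> {Up, Down}" "j \<le> r" "\<sigma> = insert s (Fib ` ({0..r} - {j}))"
    using sC(1) unfolding bundle_cones_def by blast
  obtain s' j' where s': "s' \<in> {Up, Down}" "j' \<le> r" "\<sigma>' = insert s' (Fib ` ({0..r} - {j'}))"
    using sC(2) unfolding bundle_cones_def by blast
  have sub: "\<sigma> \<union> \<sigma>' \<subseteq> bundle_rays r" using s s' unfolding bundle_rays_def by auto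
  show outB: "\<forall>\<rho>. \<rho> \<notin> bundle_rays r \<longrightarrow> b \<rho> = 0" using out sub by blast
  have rel2: "(\<Sum>\<rho>\<in>bundle_rays r. b \<rho> * real_of_int (bundle_u r c \<rho> k)) = 0" if "k < r + 1" for k
  proof -
    have "(\<Sum>\<rho>\<in>\<sigma> \<union> \<sigma>'. b \<rho> * real_of_int (bundle_u r c \<rho> k))
        = (\<Sum>\<rho>\<in>bundle_rays r. b \<rho> * real_of_int (bundle_u r c \<rho> k))"
    proof (rule sum.mono_neutral_left)
      show "finite (bundle_rays r)" by (simp add: bundle_rays_def)
      show "\<sigma> \<union> \<sigma>' \<subseteq> bundle_rays r" by (rule sub)
      show "\<forall>i\<in>bundle_rays r - (\<sigma> \<union> \<sigma>'). b i * real_of_int (bundle_u r c i k) = 0"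
        using out by simp
    qed
    thus ?thesis using rel that by simp
  qed
  have "(\<Sum>\<rho>\<in>bundle_rays r. b \<rho> * real_of_int (bundle_u r c \<rho> r)) = b Up - b Down"
    by (simp add: bundle_sum, rule sum.neutral, auto)
  then show UD: "b Up = b Down" using rel2[of r] by simp
  show L2: "\<forall>i\<le>r. b (Fib i) = b (Fib 0) - b Down * real_of_int (c i - c 0)"
  proof (intro allI impI)
    fix i assume i: "i \<le> r"
    show "b (Fib i) = b (Fib 0) - b Down * real_of_int (c i - c 0)"
    proof (cases i)
      case 0 then show ?thesis by simp
    next
      case (Suc k)
      have k: "k < r" using i Suc by simp
      have "(\<Sum>i\<in>{0..r}. b (Fib i) * real_of_int (bundle_u r c (Fib i) k))
          = b (Fib 0) * (-1) + (\<Sum>i\<in>{Suc 0..r}. b (Fib i) * real_of_int (bundle_u r c (Fib i) k))"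
        using k by (simp add: sum.atLeast_Suc_atMost)
      also have "(\<Sum>i\<in>{Suc 0..r}. b (Fib i) * real_of_int (bundle_u r c (Fib i) k))
          = (\<Sum>i\<in>{Suc 0..r}. if i = k + 1 then b (Fib i) else 0)"
        by (rule sum.cong) auto
      also have "\<dots> = b (Fib (k+1))" using k by (simp add: sum.delta)
      finally have "(\<Sum>i\<in>{0..r}. b (Fib i) * real_of_int (bundle_u r c (Fib i) k))
          = - b (Fib 0) + b (Fib (k+1))" by simp
      moreover have "(\<Sum>\<rho>\<in>bundle_rays r. b \<rho> * real_of_int (bundle_u r c \<rho> k)) =
          (\<Sum>i\<in>{0..r}. b (Fib i) * real_of_int (bundle_u r c (Fib i) k))
          + b Down * real_of_int (c (k+1) - c 0)"
        using k by (simp add: bundle_sum)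
      ultimately have "- b (Fib 0) + b (Fib (k+1)) + b Down * real_of_int (c (k+1) - c 0) = 0"
        using rel2[of k] k by simp
      then show ?thesis using Suc by (simp add: algebra_simps)
    qed
  qed
  show D: "b Down \<ge> 0"
  proof (cases "Down \<in> \<sigma> \<inter> \<sigma>'")
    case True
    then have "s = Down" "s' = Down" using s s' by auto
    then have "Up \<notin> \<sigma> \<union> \<sigma>'" using s s' by auto
    then show ?thesis using out UD by simp
  next
    case False
    then show ?thesis using out one1 one2 by (cases "Down \<in> \<sigma> \<union> \<sigma>'") auto
  qed
  have "Fib j \<notin> \<sigma>" using s by auto
  then have bj: "b (Fib j) \<ge> 0" using out one2 by (cases "Fib j \<in> \<sigma>'") auto
  have "b (Fib m) = b (Fib j) + b Down * real_of_int (c j - c m)"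
    using lin[OF L2[rule_format, OF m(1)] L2[rule_format, OF s(2)]] by simp
  moreover have "b Down * real_of_int (c j - c m) \<ge> 0"
    using D m(2) s(2) by simp
  ultimately show "b (Fib m) \<ge> 0" using bj by simp
qed

lemma cone_scale:
  assumes "wall_vec n u C w" "t \<ge> 0"
  shows "(\<lambda>\<rho>. t * w \<rho>) \<in> NE_cone n u C"
  unfolding NE_cone_def cone_gen_def
  by (rule CollectI, rule exI[of _ "{w}"], rule exI[of _ "\<lambda>_. t"]) (use assms in auto)

lemma cone_props:
  assumes z: "z \<in> NE_cone (r + 1) (bundle_u r c) (bundle_cones r)"
    and m: "m \<le> r" "\<forall>i\<le>r. c m \<le> c i"
  shows "z Up = z Down"
    and "\<forall>i\<le>r. z (Fib i) = z (Fib 0) - z Down * real_of_int (c i - c 0)"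
    and "z Down \<ge> 0"
    and "z (Fib m) \<ge> 0"
    and "\<forall>\<rho>. \<rho> \<notin> bundle_rays r \<longrightarrow> z \<rho> = 0"
proof -
  obtain S l where S: "finite S" "S \<subseteq> {b. wall_vec (r + 1) (bundle_u r c) (bundle_cones r) b}"
    "\<forall>g\<in>S. l g \<ge> 0" "z = (\<lambda>\<rho>. \<Sum>g\<in>S. l g * g \<rho>)"
    using z unfolding NE_cone_def cone_gen_def by blast
  have W: "wall_vec (r + 1) (bundle_u r c) (bundle_cones r) g" if "g \<in> S" for g
    using S(2) that by blast
  note P = wall_props[OF W m]
  show "z Up = z Down" using S(4) P(1) by (auto intro!: sum.cong)
  show "\<forall>i\<le>r. z (Fib i) = z (Fib 0) - z Down * real_of_int (c i - c 0)"
  proof (intro allI impI)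
    fix i assume i: "i \<le> r"
    have gi: "g (Fib i) = g (Fib 0) - g Down * real_of_int (c i - c 0)" if "g \<in> S" for g
      using P(2)[OF that] i by blast
    have "z (Fib i) = (\<Sum>g\<in>S. l g * g (Fib i))" using S(4) by simp
    also have "\<dots> = (\<Sum>g\<in>S. l g * (g (Fib 0) - g Down * real_of_int (c i - c 0)))"
      by (rule sum.cong[OF refl]) (simp add: gi)
    also have "\<dots> = (\<Sum>g\<in>S. l g * g (Fib 0)) - (\<Sum>g\<in>S. l g * g Down) * real_of_int (c i - c 0)"
      by (simp add: right_diff_distrib sum_subtractf sum_distrib_right mult.assoc)
    also have "\<dots> = z (Fib 0) - z Down * real_of_int (c i - c 0)" using S(4) by simp
    finally show "z (Fib i) = z (Fib 0) - z Down * real_of_int (c i - c 0)" .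
  qed
  show "z Down \<ge> 0" using S(3,4) P(3) by (auto intro!: sum_nonneg)
  show "z (Fib m) \<ge> 0" using S(3,4) P(4) by (auto intro!: sum_nonneg)
  show "\<forall>\<rho>. \<rho> \<notin> bundle_rays r \<longrightarrow> z \<rho> = 0" using S(4) P(5) by (auto intro!: sum.neutral)
qed

theorem lemma3p2:
  fixes r :: nat and c :: "nat \<Rightarrow> int" and \<Delta> :: "bray \<Rightarrow> real"
    and R :: "(bray \<Rightarrow> real) set"
  assumes "r \<ge> 1"
    and "horizontal (r + 1) (bundle_rays r) (bundle_u r c) \<Delta>"
    and "\<forall>\<rho>\<in>bundle_rays r. 0 \<le> \<Delta> \<rho>"
    and "\<forall>\<rho>\<in>bundle_rays r. \<Delta> \<rho> < 1"
    and "extremal_ray (NE_cone (r + 1) (bundle_u r c) (bundle_cones r)) R"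
    and "\<forall>z\<in>R. intersect (bundle_rays r)
                 (\<lambda>\<rho>. rel_canonical (r + 1) (bundle_u r c) \<rho> + \<Delta> \<rho>) z = 0"
  shows "toric_iso_over_P1 (r + 1) (bundle_rays r) (bundle_u r c) (bundle_cones r)
                                   (bundle_rays r) (product_u r) (bundle_cones r)"
proof -
  obtain m where m: "m \<in> {0..r}" "c m = Min (c ` {0..r})" 
  proof -
    have "Min (c ` {0..r}) \<in> c ` {0..r}" by (rule Min_in) auto
    then show ?thesis using that by (metis imageE)
  qed
  have mle: "\<forall>i\<le>r. c m \<le> c i" using m(2) by simp
  have mr: "m \<le> r" using m(1) by simp
  let ?K = "NE_cone (r + 1) (bundle_u r c) (bundle_cones r)"
  let ?D = "\<lambda>\<rho>. rel_canonical (r + 1) (bundle_u r c) \<rho> + \<Delta> \<rho>"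
  obtain z where z: "z \<in> ?K" "z \<noteq> (\<lambda>_. 0)" "R = {(\<lambda>\<rho>. t * z \<rho>) | t. t \<ge> 0}"
    using assms(5) unfolding extremal_ray_def by blast
  have ext2: "\<forall>a\<in>?K. \<forall>b\<in>?K. (\<lambda>\<rho>. a \<rho> + b \<rho>) \<in> R \<longrightarrow> a \<in> R \<and> b \<in> R"
    using assms(5) unfolding extremal_ray_def by blast
  have zR: "z \<in> R" using z(3) by (auto intro: exI[of _ 1])
  note P = cone_props[OF z(1) mr mle]
  have DU: "\<Delta> Up = 0" "\<Delta> Down = 0"
    using assms(2) unfolding horizontal_def bundle_rays_def by auto
  have inter: "intersect (bundle_rays r) ?D w = (\<Sum>i\<in>{0..r}. (\<Delta> (Fib i) - 1) * w (Fib i))" for w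
    unfolding intersect_def bundle_sum
    by (auto simp: rel_canonical_def canonical_div_def pullback_KY_def DU intro!: sum.cong)
  have lt: "\<Delta> (Fib i) < 1" if "i \<le> r" for i using assms(4) that unfolding bundle_rays_def by auto
  define \<alpha> where "\<alpha> = z (Fib m)"
  define \<beta> where "\<beta> = z Down"
  have a0: "\<alpha> \<ge> 0" "\<beta> \<ge> 0" using P(3,4) unfolding \<alpha>_def \<beta>_def by auto
  have fK: "(\<lambda>\<rho>. \<alpha> * fvec r \<rho>) \<in> ?K"
    by (rule cone_scale[OF f_wall[OF assms(1)] a0(1)])
  have gK: "(\<lambda>\<rho>. \<beta> * gvec r c m \<rho>) \<in> ?K"
    by (rule cone_scale[OF g_wall[OF mr] a0(2)])
  have zdec: "(\<lambda>\<rho>. \<alpha> * fvec r \<rho> + \<beta> * gvec r c m \<rho>) = z"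
  proof
    fix \<rho> show "\<alpha> * fvec r \<rho> + \<beta> * gvec r c m \<rho> = z \<rho>"
    proof (cases \<rho>)
      case (Fib i)
      show ?thesis
      proof (cases "i \<le> r")
        case True
        have "z (Fib i) = z (Fib m) + z Down * real_of_int (c m - c i)"
          by (rule lin[OF P(2)[rule_format, OF True] P(2)[rule_format, OF mr]])
        then show ?thesis using True Fib unfolding fvec_def gvec_def \<alpha>_def \<beta>_def by simp
      next
        case False
        have "z (Fib i) = 0" using P(5) False by (auto simp: bundle_rays_def)
        then show ?thesis using Fib False unfolding fvec_def gvec_def by simp
      qed
    next
      case Up then show ?thesis using P(1) unfolding fvec_def gvec_def \<beta>_def by simp
    next
      case Down then show ?thesis unfolding fvec_def gvec_def \<beta>_def by simp
    qed
  qed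
  have both: "(\<lambda>\<rho>. \<alpha> * fvec r \<rho>) \<in> R" "(\<lambda>\<rho>. \<beta> * gvec r c m \<rho>) \<in> R"
  proof -
    have "(\<lambda>\<rho>. (\<lambda>\<rho>. \<alpha> * fvec r \<rho>) \<rho> + (\<lambda>\<rho>. \<beta> * gvec r c m \<rho>) \<rho>) \<in> R"
      using zdec zR by simp
    then have "(\<lambda>\<rho>. \<alpha> * fvec r \<rho>) \<in> R \<and> (\<lambda>\<rho>. \<beta> * gvec r c m \<rho>) \<in> R"
      by (rule ext2[rule_format, OF fK gK])
    then show "(\<lambda>\<rho>. \<alpha> * fvec r \<rho>) \<in> R" "(\<lambda>\<rho>. \<beta> * gvec r c m \<rho>) \<in> R"
      by blast+
  qed
  have S1: "(\<Sum>i\<in>{0..r}. 1 - \<Delta> (Fib i)) > 0"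
    by (rule sum_pos) (use lt in auto)
  have "(\<Sum>i\<in>{0..r}. (\<Delta> (Fib i) - 1) * (\<alpha> * fvec r (Fib i))) = - \<alpha> * (\<Sum>i\<in>{0..r}. 1 - \<Delta> (Fib i))"
    unfolding sum_distrib_left by (rule sum.cong) (auto simp: fvec_def algebra_simps)
  moreover have "(\<Sum>i\<in>{0..r}. (\<Delta> (Fib i) - 1) * (\<alpha> * fvec r (Fib i))) = 0"
  proof -
    have "intersect (bundle_rays r) ?D (\<lambda>\<rho>. \<alpha> * fvec r \<rho>) = 0" using assms(6) both(1) by blast
    then show ?thesis unfolding inter .
  qed
  ultimately have "\<alpha> = 0" using S1 by simp
  have bnz: "\<beta> \<noteq> 0"
  proof
    assume "\<beta> = 0"
    then have "z = (\<lambda>_. 0)" using zdec[symmetric] \<open>\<alpha> = 0\<close> by simp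
    with z(2) show False by simp
  qed
  have "(\<Sum>i\<in>{0..r}. (\<Delta> (Fib i) - 1) * (\<beta> * gvec r c m (Fib i))) = 0"
  proof -
    have "intersect (bundle_rays r) ?D (\<lambda>\<rho>. \<beta> * gvec r c m \<rho>) = 0" using assms(6) both(2) by blast
    then show ?thesis unfolding inter .
  qed
  moreover have "(\<Sum>i\<in>{0..r}. (\<Delta> (Fib i) - 1) * (\<beta> * gvec r c m (Fib i)))
     = \<beta> * (\<Sum>i\<in>{0..r}. (1 - \<Delta> (Fib i)) * real_of_int (c i - c m))"
    unfolding sum_distrib_left by (rule sum.cong) (auto simp: gvec_def algebra_simps)
  ultimately have S2: "(\<Sum>i\<in>{0..r}. (1 - \<Delta> (Fib i)) * real_of_int (c i - c m)) = 0"
    using bnz by simp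
  have "\<forall>i\<in>{0..r}. (1 - \<Delta> (Fib i)) * real_of_int (c i - c m) = 0"
    by (rule sum_nonneg_eq_0_iff[THEN iffD1, OF _ _ S2])
       (auto intro!: mult_nonneg_nonneg simp: mle dest: lt[THEN less_imp_le])
  note Z = this
  have cm: "c i = c m" if "i \<le> r" for i
  proof -
    have "(1 - \<Delta> (Fib i)) * real_of_int (c i - c m) = 0" using Z that by simp
    moreover have "1 - \<Delta> (Fib i) \<noteq> 0" using lt[OF that] by simp
    ultimately show ?thesis by simp
  qed
  have cc': "c (Suc k) = c 0" if "k < r" for k using cm[of "k+1"] cm[of 0] that by simp
  have uu: "bundle_u r c \<rho> = product_u r \<rho>" for \<rho>
    unfolding product_u_def by (cases \<rho>) (auto simp: cc' intro!: ext)
  let ?A = "\<lambda>i j. if i = j then (1::int) else 0"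
  have mv: "\<forall>\<rho>\<in>bundle_rays r. mat_vec (r + 1) ?A (bundle_u r c \<rho>) = product_u r \<rho>"
  proof
    fix \<rho> assume h: "\<rho> \<in> bundle_rays r"
    show "mat_vec (r + 1) ?A (bundle_u r c \<rho>) = product_u r \<rho>"
      unfolding mvid uu[symmetric]
    proof
      fix k show "(if k < r + 1 then bundle_u r c \<rho> k else 0) = bundle_u r c \<rho> k"
        using h by (cases \<rho>) (auto simp: bundle_rays_def)
    qed
  qed
  show ?thesis unfolding toric_iso_over_P1_def
    apply (rule exI[of _ ?A], rule exI[of _ id])
    apply (intro conjI)
        apply (rule la)
       apply (rule allI, rule refl)
      apply simp
     apply (simp only: id_apply, rule mv)
    apply simp
    done
qed

end
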